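(* Let $w$ be a linearly recurrent infinite word over a finite alphabet $\Sigma$. Suppose there exists a positive constant $C$ such that for every sufficiently large $n$ one has $\sum_{m\leq n}\mathit{ASF}_{w}(m)\geq Cn^2$. Then $w$ is abelian-square rich.
   Context: For a word $u$ and letter $a$, $|u|_a$ is the number of occurrences of $a$ in $u$; the Parikh vector of $u$ over $\Sigma=\{a_1,\dots,a_\sigma\}$ is $P(u)=(|u|_{a_1},\dots,|u|_{a_\sigma})$. An abelian square is a word $v_1v_2$ with $P(v_1)=P(v_2)$. For a finite or infinite word $w$, $\mathit{ASF}_w(m)$ denotes the number of distinct factors of $w$ of length $m$ that are abelian squares. The factor complexity $p_w(n)$ is the number of distinct factors of $w$ of length $n$. The recurrence index $R_w(n)$ is the least $m$ such that every factor of $w$ of length $m$ contains all factors of $w$ of length $n$; $w$ is uniformly recurrent if $R_w(n)$ is defined for all $n$, and linearly recurrent if moreover $R_w(n)/n$ is bounded. An infinite word $w$ is abelian-square rich if there is a positive constant $C$ such that for all sufficiently large $n$, $\frac{1}{p_w(n)}\sum_{v}(\text{number of distinct abelian square factors of } v)\geq Cn^2$, where the sum ranges over the factors $v$ of $w$ of length $n$. *)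

theory Defs
  imports Complex_Main
begin

definition parikh :: "'a list \<Rightarrow> ('a \<Rightarrow> nat)" where
  "parikh u = (\<lambda>a. count_list u a)"

definition abelian_square :: "'a list \<Rightarrow> bool" where
  "abelian_square u \<longleftrightarrow> (\<exists>v1 v2. u = v1 @ v2 \<and> parikh v1 = parikh v2)"

definition factor_at :: "(nat \<Rightarrow> 'a) \<Rightarrow> nat \<Rightarrow> nat \<Rightarrow> 'a list" where
  "factor_at w i n = map w [i..<i+n]"

definition factors_len :: "(nat \<Rightarrow> 'a) \<Rightarrow> nat \<Rightarrow> 'a list set" where
  "factors_len w n = {factor_at w i n | i. True}"

definition complexity :: "(nat \<Rightarrow> 'a) \<Rightarrow> nat \<Rightarrow> nat" where
  "complexity w n = card (factors_len w n)"

definition ASF :: "(nat \<Rightarrow> 'a) \<Rightarrow> nat \<Rightarrow> nat" where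
  "ASF w m = card {u \<in> factors_len w m. abelian_square u}"

definition list_factors :: "'a list \<Rightarrow> 'a list set" where
  "list_factors v = {u. \<exists>x y. v = x @ u @ y}"

definition num_ab_sq_factors :: "'a list \<Rightarrow> nat" where
  "num_ab_sq_factors v = card {u \<in> list_factors v. u \<noteq> [] \<and> abelian_square u}"

definition rec_window :: "(nat \<Rightarrow> 'a) \<Rightarrow> nat \<Rightarrow> nat \<Rightarrow> bool" where
  "rec_window w n m \<longleftrightarrow> (\<forall>i. factors_len w n \<subseteq> list_factors (factor_at w i m))"

definition recurrence_index :: "(nat \<Rightarrow> 'a) \<Rightarrow> nat \<Rightarrow> nat" where
  "recurrence_index w n = (LEAST m. rec_window w n m)"

definition uniformly_recurrent :: "(nat \<Rightarrow> 'a) \<Rightarrow> bool" where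
  "uniformly_recurrent w \<longleftrightarrow> (\<forall>n. \<exists>m. rec_window w n m)"

definition linearly_recurrent :: "(nat \<Rightarrow> 'a) \<Rightarrow> bool" where
  "linearly_recurrent w \<longleftrightarrow> uniformly_recurrent w \<and>
     (\<exists>K::real. \<forall>n>0. real (recurrence_index w n) / real n \<le> K)"

definition abelian_square_rich :: "(nat \<Rightarrow> 'a) \<Rightarrow> bool" where
  "abelian_square_rich w \<longleftrightarrow> (\<exists>C::real. C > 0 \<and>
     (\<forall>\<^sub>F n in sequentially.
        (1 / real (complexity w n)) * (\<Sum>v\<in>factors_len w n. real (num_ab_sq_factors v))
          \<ge> C * real n ^ 2))"

end

theory Submission
  imports Defs
begin

lemma factor_at_prefix:
  assumes "k \<le> n" shows "\<exists>y. factor_at w j n = factor_at w j k @ y"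
proof -
  have "[j..<j+n] = [j..<j+k] @ [j+k..<j+n]"
    using assms upt_add_eq_append[of j "j+k" "n-k"] by simp
  then show ?thesis unfolding factor_at_def by auto
qed

lemma list_factors_trans:
  "u \<in> list_factors v \<Longrightarrow> v \<in> list_factors x \<Longrightarrow> u \<in> list_factors x"
proof -
  assume "u \<in> list_factors v" "v \<in> list_factors x"
  then obtain a b c d where "v = a @ u @ b" "x = c @ v @ d" unfolding list_factors_def by blast
  then have "x = (c @ a) @ u @ (b @ d)" by simp
  then show ?thesis unfolding list_factors_def by blast
qed

lemma finite_list_factors: "finite (list_factors (v::'a::finite list))"
proof -
  have "list_factors v \<subseteq> {xs. set xs \<subseteq> UNIV \<and> length xs \<le> length v}"
    unfolding list_factors_def by auto
  then show ?thesis using finite_subset finite_lists_length_le[OF finite_UNIV] by blast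
qed

lemma length_factor_at[simp]: "length (factor_at w i n) = n"
  unfolding factor_at_def by simp

lemma finite_factors_len: "finite (factors_len (w::nat \<Rightarrow> 'a::finite) n)"
proof -
  have "factors_len w n \<subseteq> {xs. set xs \<subseteq> UNIV \<and> length xs \<le> n}"
    unfolding factors_len_def by auto
  then show ?thesis using finite_subset finite_lists_length_le[OF finite_UNIV] by blast
qed

lemma factors_len_ne: "factors_len w n \<noteq> {}"
  unfolding factors_len_def by auto

lemma ASF0: "ASF w 0 \<le> 1"
proof -
  have "{u \<in> factors_len w 0. abelian_square u} \<subseteq> {[]}"
    unfolding factors_len_def factor_at_def by auto
  then have "card {u \<in> factors_len w 0. abelian_square u} \<le> card {[]::'a list}"
    by (rule card_mono[rotated]) simp
  then show ?thesis unfolding ASF_def by simp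
qed

lemma key:
  fixes w :: "nat \<Rightarrow> 'a::finite"
  assumes rw: "rec_window w n m" and mN: "m \<le> N"
  shows "(\<Sum>k\<in>{1..n}. ASF w k) \<le> num_ab_sq_factors (factor_at w i N)"
proof -
  define S where "S k = {u \<in> factors_len w k. abelian_square u}" for k
  have fin: "finite (S k)" for k unfolding S_def using finite_factors_len[of w k] by simp
  have disj: "\<forall>k\<in>{1..n}. \<forall>l\<in>{1..n}. k \<noteq> l \<longrightarrow> S k \<inter> S l = {}"
    unfolding S_def factors_len_def by (auto dest: arg_cong[where f=length])
  have "(\<Sum>k\<in>{1..n}. ASF w k) = (\<Sum>k\<in>{1..n}. card (S k))"
    unfolding ASF_def S_def by simp
  also have "\<dots> = card (\<Union>k\<in>{1..n}. S k)"
    using card_UN_disjoint[OF _ _ disj] fin by simp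
  also have "\<dots> \<le> num_ab_sq_factors (factor_at w i N)"
    unfolding num_ab_sq_factors_def
  proof (rule card_mono)
    show "finite {u \<in> list_factors (factor_at w i N). u \<noteq> [] \<and> abelian_square u}"
      using finite_list_factors[of "factor_at w i N"] by simp
    show "(\<Union>k\<in>{1..n}. S k) \<subseteq> {u \<in> list_factors (factor_at w i N). u \<noteq> [] \<and> abelian_square u}"
    proof
      fix u assume "u \<in> (\<Union>k\<in>{1..n}. S k)"
      then obtain k j where k: "1 \<le> k" "k \<le> n" and u: "u = factor_at w j k" "abelian_square u"
        unfolding S_def factors_len_def by (auto dest: arg_cong[where f=length])
      obtain y where y: "factor_at w j n = u @ y" using factor_at_prefix[OF k(2)] u by blast
      have "u \<in> list_factors (factor_at w j n)" unfolding list_factors_def using y by auto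
      moreover have "factor_at w j n \<in> list_factors (factor_at w i m)"
        using rw unfolding rec_window_def factors_len_def by auto
      moreover obtain z where "factor_at w i N = factor_at w i m @ z"
        using factor_at_prefix[OF mN] by blast
      then have "factor_at w i m \<in> list_factors (factor_at w i N)"
        unfolding list_factors_def by auto
      ultimately have "u \<in> list_factors (factor_at w i N)"
        using list_factors_trans by blast
      moreover have "u \<noteq> []" using u(1) k length_factor_at[of w j k] by (metis le_zero_eq list.size(3) not_one_le_zero)
      ultimately show "u \<in> {u \<in> list_factors (factor_at w i N). u \<noteq> [] \<and> abelian_square u}"
        using u by auto
    qed
  qed
  finally show ?thesis .
qed

theorem lemma1:
  fixes w :: "nat \<Rightarrow> 'a::finite"
  assumes "linearly_recurrent w"
    and "\<exists>C::real. C > 0 \<and>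
           (\<forall>\<^sub>F n in sequentially. (\<Sum>m\<le>n. real (ASF w m)) \<ge> C * real n ^ 2)"
  shows "abelian_square_rich w"
proof -
  obtain C where C: "C > 0" and ev: "\<forall>\<^sub>F n in sequentially. (\<Sum>m\<le>n. real (ASF w m)) \<ge> C * real n ^ 2"
    using assms(2) by blast
  obtain N0 where N0: "\<And>n. n \<ge> N0 \<Longrightarrow> (\<Sum>m\<le>n. real (ASF w m)) \<ge> C * real n ^ 2"
    using ev unfolding eventually_sequentially by blast
  obtain K where K: "\<And>n. n > 0 \<Longrightarrow> real (recurrence_index w n) / real n \<le> K"
    and ur: "uniformly_recurrent w"
    using assms(1) unfolding linearly_recurrent_def by blast
  define K1 where "K1 = nat (ceiling (max K 1))"
  have K1pos: "K1 \<ge> 1" unfolding K1_def by linarith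
  have KK1: "K \<le> real K1" unfolding K1_def by linarith
  have rwR: "rec_window w n (recurrence_index w n)" for n
    using ur unfolding uniformly_recurrent_def recurrence_index_def by (meson LeastI_ex)
  have Rle: "real (recurrence_index w n) \<le> real K1 * real n" if "n > 0" for n
  proof -
    have "real (recurrence_index w n) \<le> K * real n"
      using K[OF that] that by (simp add: divide_le_eq)
    also have "\<dots> \<le> real K1 * real n" using KK1 by (simp add: mult_right_mono)
    finally show ?thesis .
  qed
  define c where "c = C / (8 * real K1 ^ 2)"
  have cpos: "c > 0" unfolding c_def using C K1pos by simp
  define M where "M = K1 * (N0 + 1) + nat (ceiling (sqrt (1 / c))) + 1"
  have bound: "real (num_ab_sq_factors (factor_at w i N)) \<ge> c * real N ^ 2"
    if NM: "N \<ge> M" for N i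
  proof -
    define n where "n = N div K1"
    have n1: "K1 * n \<le> N" unfolding n_def by simp
    have n2: "N < K1 * (n + 1)"
    proof -
      have "N = K1 * n + N mod K1" unfolding n_def by simp
      moreover have "N mod K1 < K1" using K1pos by simp
      ultimately show ?thesis by simp
    qed
    have "K1 * (N0 + 1) \<le> N" using NM unfolding M_def by simp
    then have nN0: "n \<ge> N0 + 1" unfolding n_def using K1pos
      using div_le_mono[of "K1 * (N0 + 1)" N K1] by simp
    have npos: "n > 0" using nN0 by simp
    have "recurrence_index w n \<le> N"
    proof -
      have "real (recurrence_index w n) \<le> real (K1 * n)" using Rle[OF npos] by simp
      then show ?thesis using n1 by linarith
    qed
    from key[OF rwR this]
    have k: "(\<Sum>k\<in>{1..n}. ASF w k) \<le> num_ab_sq_factors (factor_at w i N)" .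
    have split: "(\<Sum>m\<le>n. real (ASF w m)) = real (ASF w 0) + (\<Sum>k\<in>{1..n}. real (ASF w k))"
    proof -
      have "{..n} = insert 0 {1..n}" by auto
      then show ?thesis by simp
    qed
    have "C * real n ^ 2 - 1 \<le> (\<Sum>k\<in>{1..n}. real (ASF w k))"
      using N0[of n] nN0 split ASF0[of w] by simp
    also have "\<dots> \<le> real (num_ab_sq_factors (factor_at w i N))"
    proof -
      have "real (\<Sum>k\<in>{1..n}. ASF w k) \<le> real (num_ab_sq_factors (factor_at w i N))"
        using k by (rule of_nat_mono)
      then show ?thesis by (simp add: of_nat_sum)
    qed
    finally have A: "C * real n ^ 2 - 1 \<le> real (num_ab_sq_factors (factor_at w i N))" .
    have "real N \<le> 2 * real K1 * real n"
    proof -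
      have "K1 * (n + 1) \<le> 2 * K1 * n" using npos by simp
      from less_le_trans[OF n2 this] have "N \<le> 2 * K1 * n" by simp
      then show ?thesis using of_nat_le_iff[of N "2 * K1 * n", where 'a=real] by simp
    qed
    then have "real N ^ 2 \<le> (2 * real K1 * real n) ^ 2"
      by (simp add: power_mono)
    then have B: "real N ^ 2 \<le> 4 * real K1 ^ 2 * real n ^ 2" by (simp add: power_mult_distrib)
    have "2 * c * real N ^ 2 \<le> 2 * c * (4 * real K1 ^ 2 * real n ^ 2)"
      using B cpos by simp
    also have "\<dots> = C * real n ^ 2" unfolding c_def using K1pos by simp
    finally have D: "2 * c * real N ^ 2 \<le> C * real n ^ 2" .
    have "sqrt (1/c) \<le> real N" using NM unfolding M_def by linarith
    then have "(sqrt (1/c))^2 \<le> real N ^ 2" by (rule power_mono) (use cpos in simp)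
    then have "1/c \<le> real N ^ 2" using cpos by simp
    then have E: "1 \<le> c * real N ^ 2" using cpos by (simp add: field_simps)
    show ?thesis using A D E by linarith
  qed
  show ?thesis unfolding abelian_square_rich_def
  proof (intro exI conjI)
    show "c > 0" by (rule cpos)
    show "\<forall>\<^sub>F n in sequentially. (1 / real (complexity w n)) * (\<Sum>v\<in>factors_len w n. real (num_ab_sq_factors v))
          \<ge> c * real n ^ 2"
      unfolding eventually_sequentially
    proof (intro exI allI impI)
      fix N assume NM: "N \<ge> M"
      have fin: "finite (factors_len w N)" by (rule finite_factors_len)
      have cp: "complexity w N > 0" unfolding complexity_def
        using fin factors_len_ne card_gt_0_iff by blast
      have "(\<Sum>v\<in>factors_len w N. c * real N ^ 2) \<le> (\<Sum>v\<in>factors_len w N. real (num_ab_sq_factors v))"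
        by (rule sum_mono) (use bound[OF NM] in \<open>auto simp: factors_len_def\<close>)
      then have "real (complexity w N) * (c * real N ^ 2) \<le> (\<Sum>v\<in>factors_len w N. real (num_ab_sq_factors v))"
        unfolding complexity_def by simp
      then show "(1 / real (complexity w N)) * (\<Sum>v\<in>factors_len w N. real (num_ab_sq_factors v)) \<ge> c * real N ^ 2"
        using cp by (simp add: field_simps)
    qed
  qed
qed

end
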